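(* Let $\mathcal{A}$ be a separable unital C*-algebra and $\mathcal{B}$ a unital C*-algebra, and let $\mathcal{A}_1\subset\mathcal{A}_2\subset\cdots\subset\mathcal{A}$ be C*-subalgebras with $\mathcal{A}=\left[\bigcup_{n\in\mathbb{N}}\mathcal{A}_n\right]^-$. Suppose $\pi,\rho\in\mathrm{Rep}(\mathcal{A},\mathcal{B})$ are such that for every $n\in\mathbb{N}$: (1) $\rho|_{\mathcal{A}_n}\in\mathcal{U}_{\mathcal{B}}(\pi|_{\mathcal{A}_n})$, i.e. there is a unitary $U\in\mathcal{B}$ with $U^*\pi(a)U=\rho(a)$ for all $a\in\mathcal{A}_n$; and (2) the unitary group of the relative commutant $\rho(\mathcal{A}_n)'\cap\mathcal{B}$ is connected. Then there is a strong internal path from $\pi$ to $\rho$.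
   Context: $\mathrm{Rep}(\mathcal{A},\mathcal{B})$ is the set of unital $*$-homomorphisms $\mathcal{A}\to\mathcal{B}$ with the topology of pointwise norm convergence. $\mathcal{U}_{\mathcal{B}}$ is the unitary group of $\mathcal{B}$ and $\mathcal{U}_{\mathcal{B}}(\pi)=\{U^*\pi(\cdot)U:U\in\mathcal{U}_{\mathcal{B}}\}$. A strong internal path from $\pi$ to $\rho$ is a norm-continuous map $\gamma:[0,1)\to\mathcal{U}_{\mathcal{B}}$ such that $\lim_{t\to1^-}\|\gamma(t)^*\pi(a)\gamma(t)-\rho(a)\|=0$ for every $a\in\mathcal{A}$. *)

theory Defs
  imports "HOL-Analysis.Analysis"
begin

class complex_vector = real_vector +
  fixes scaleC :: "complex \<Rightarrow> 'a \<Rightarrow> 'a"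
  assumes scaleC_add_right: "scaleC c (x + y) = scaleC c x + scaleC c y"
    and scaleC_add_left: "scaleC (b + c) x = scaleC b x + scaleC c x"
    and scaleC_scaleC: "scaleC b (scaleC c x) = scaleC (b * c) x"
    and scaleC_one: "scaleC 1 x = x"
    and scaleR_scaleC: "scaleR r x = scaleC (complex_of_real r) x"

class cstar_algebra = complex_vector + real_normed_algebra_1 + banach +
  fixes adj :: "'a \<Rightarrow> 'a"
  assumes norm_scaleC: "norm (scaleC c x) = cmod c * norm x"
    and scaleC_mult_left: "scaleC c x * y = scaleC c (x * y)"
    and mult_scaleC_right: "x * scaleC c y = scaleC c (x * y)"
    and adj_adj: "adj (adj x) = x"
    and adj_add: "adj (x + y) = adj x + adj y"
    and adj_scaleC: "adj (scaleC c x) = scaleC (cnj c) (adj x)"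
    and adj_mult: "adj (x * y) = adj y * adj x"
    and cstar_identity: "norm (adj x * x) = norm x ^ 2"

definition separable_space :: "'a::metric_space itself \<Rightarrow> bool" where
  "separable_space _ \<longleftrightarrow> (\<exists>D::'a set. countable D \<and> closure D = UNIV)"

definition cstar_subalgebra :: "'a::cstar_algebra set \<Rightarrow> bool" where
  "cstar_subalgebra S \<longleftrightarrow> 0 \<in> S \<and> (\<forall>x\<in>S. \<forall>y\<in>S. x + y \<in> S \<and> x * y \<in> S)
     \<and> (\<forall>c. \<forall>x\<in>S. scaleC c x \<in> S) \<and> (\<forall>x\<in>S. adj x \<in> S) \<and> closed S"

definition Rep :: "('a::cstar_algebra \<Rightarrow> 'b::cstar_algebra) set" where
  "Rep = {\<pi>. (\<forall>x y. \<pi> (x + y) = \<pi> x + \<pi> y) \<and> (\<forall>c x. \<pi> (scaleC c x) = scaleC c (\<pi> x))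
     \<and> (\<forall>x y. \<pi> (x * y) = \<pi> x * \<pi> y) \<and> (\<forall>x. \<pi> (adj x) = adj (\<pi> x)) \<and> \<pi> 1 = 1}"

definition unitary :: "'a::cstar_algebra \<Rightarrow> bool" where
  "unitary u \<longleftrightarrow> adj u * u = 1 \<and> u * adj u = 1"

definition rel_commutant_unitaries :: "('a::cstar_algebra \<Rightarrow> 'b::cstar_algebra) \<Rightarrow> 'a set \<Rightarrow> 'b set" where
  "rel_commutant_unitaries \<rho> S = {u. unitary u \<and> (\<forall>a\<in>S. u * \<rho> a = \<rho> a * u)}"

definition strong_internal_path ::
  "('a::cstar_algebra \<Rightarrow> 'b::cstar_algebra) \<Rightarrow> ('a \<Rightarrow> 'b) \<Rightarrow> (real \<Rightarrow> 'b) \<Rightarrow> bool" where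
  "strong_internal_path \<pi> \<rho> \<gamma> \<longleftrightarrow> continuous_on {0..<1} \<gamma> \<and> (\<forall>t\<in>{0..<1}. unitary (\<gamma> t))
     \<and> (\<forall>a. ((\<lambda>t. norm (adj (\<gamma> t) * \<pi> a * \<gamma> t - \<rho> a)) \<longlongrightarrow> 0) (at_left 1))"

end

theory Submission
  imports Defs
begin

lemma scaleC_zero_right[simp]: "scaleC c (0::'a::complex_vector) = 0"
  by (metis add_cancel_right_right scaleC_add_right)
lemma scaleC_minus_right: "scaleC c (- (x::'a::complex_vector)) = - scaleC c x"
  by (metis add_eq_0_iff scaleC_add_right scaleC_zero_right)
lemma scaleC_diff_right: "scaleC c ((x::'a::complex_vector) - y) = scaleC c x - scaleC c y"
  by (metis diff_conv_add_uminus scaleC_add_right scaleC_minus_right)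

lemma adj_zero[simp]: "adj (0::'a::cstar_algebra) = 0"
  by (metis add_cancel_right_right adj_add)
lemma adj_minus: "adj (- (x::'a::cstar_algebra)) = - adj x"
  by (metis add_eq_0_iff adj_add adj_zero)
lemma adj_diff: "adj ((x::'a::cstar_algebra) - y) = adj x - adj y"
  by (metis adj_add adj_minus diff_conv_add_uminus)
lemma adj_one[simp]: "adj (1::'a::cstar_algebra) = 1"
  by (metis adj_adj adj_mult mult.right_neutral)
lemma adj_scaleR: "adj (scaleR r (x::'a::cstar_algebra)) = scaleR r (adj x)"
  by (simp add: scaleR_scaleC adj_scaleC)
lemma adj_of_real[simp]: "adj (of_real r :: 'a::cstar_algebra) = of_real r"
  by (simp add: of_real_def adj_scaleR)

lemma norm_adj_le: "norm (adj (x::'a::cstar_algebra)) \<ge> norm x"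
proof (cases "x = 0")
  case True then show ?thesis by simp
next
  case False
  have "norm x ^ 2 = norm (adj x * x)" by (simp add: cstar_identity)
  also have "\<dots> \<le> norm (adj x) * norm x" by (rule norm_mult_ineq)
  finally have "norm x * norm x \<le> norm (adj x) * norm x" by (simp add: power2_eq_square)
  then show ?thesis using False by simp
qed
lemma norm_adj[simp]: "norm (adj (x::'a::cstar_algebra)) = norm x"
  by (metis adj_adj antisym norm_adj_le)

lemma unitary_norm: "unitary (u::'a::cstar_algebra) \<Longrightarrow> norm u = 1"
  unfolding unitary_def
  by (metis cstar_identity norm_ge_zero norm_one power2_eq_1_iff abs_of_nonneg zero_le_one abs_one power2_eq_square power_one real_sqrt_abs real_sqrt_one)
lemma unitary_one: "unitary (1::'a::cstar_algebra)"
  by (simp add: unitary_def)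
lemma unitary_mult: "unitary (u::'a::cstar_algebra) \<Longrightarrow> unitary v \<Longrightarrow> unitary (u * v)"
  unfolding unitary_def adj_mult
  by (metis mult.assoc mult.left_neutral)
lemma unitary_adj: "unitary (u::'a::cstar_algebra) \<Longrightarrow> unitary (adj u)"
  unfolding unitary_def by (simp add: adj_adj)

lemma rep_add: "\<pi> \<in> Rep \<Longrightarrow> \<pi> (x + y) = \<pi> x + \<pi> y" by (simp add: Rep_def)
lemma rep_mult: "\<pi> \<in> Rep \<Longrightarrow> \<pi> (x * y) = \<pi> x * \<pi> y" by (simp add: Rep_def)
lemma rep_adj: "\<pi> \<in> Rep \<Longrightarrow> \<pi> (adj x) = adj (\<pi> x)" by (simp add: Rep_def)
lemma rep_scaleC: "\<pi> \<in> Rep \<Longrightarrow> \<pi> (scaleC c x) = scaleC c (\<pi> x)" by (simp add: Rep_def)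
lemma rep_one: "\<pi> \<in> Rep \<Longrightarrow> \<pi> 1 = 1" by (simp add: Rep_def)
lemma rep_zero: "\<pi> \<in> Rep \<Longrightarrow> \<pi> 0 = 0"
  by (metis add_cancel_right_right add_0 rep_add)
lemma rep_diff: "\<pi> \<in> Rep \<Longrightarrow> \<pi> (x - y) = \<pi> x - \<pi> y"
  by (metis diff_add_cancel eq_diff_eq rep_add)
lemma rep_scaleR: "\<pi> \<in> Rep \<Longrightarrow> \<pi> (scaleR r x) = scaleR r (\<pi> x)"
  by (simp add: scaleR_scaleC rep_scaleC)


lemma inv_exists:
  fixes k :: "'a::{real_normed_algebra_1,banach}"
  assumes k: "norm k < 1"
  shows "\<exists>z. z * (1 - k) = 1 \<and> (1 - k) * z = 1 \<and> norm z \<le> 1 / (1 - norm k)"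
proof -
  have "\<exists>!z. 1 + k * z = z"
    apply (rule banach_fix_type[of "norm k"])
    using k apply simp_all
    by (metis dist_norm norm_mult_ineq right_diff_distrib)
  then obtain z where z: "1 + k * z = z" by blast
  have "\<exists>!z. 1 + z * k = z"
    apply (rule banach_fix_type[of "norm k"])
    using k apply simp_all
    by (metis dist_norm norm_mult_ineq left_diff_distrib mult.commute)
  then obtain z' where z': "1 + z' * k = z'" by blast
  have r: "(1 - k) * z = 1" using z by (simp add: algebra_simps)
  have l: "z' * (1 - k) = 1" using z' by (simp add: algebra_simps)
  have "z' = z" by (metis l r mult.assoc mult.left_neutral mult.right_neutral)
  moreover have "norm z \<le> 1 / (1 - norm k)"
  proof -
    have "norm z \<le> 1 + norm k * norm z"
      by (metis z norm_mult_ineq norm_one norm_triangle_le add_left_mono)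
    then have "norm z * (1 - norm k) \<le> 1" by (simp add: algebra_simps)
    then show ?thesis using k by (simp add: field_simps)
  qed
  ultimately show ?thesis using l r by blast
qed

lemma commute_inv:
  fixes c y z :: "'a::ring_1"
  assumes "c * y = y * c" "z * y = 1" "y * z = 1"
  shows "c * z = z * c"
proof -
  have "c * z = z * y * c * z" by (metis assms(2) mult.assoc mult_1_left)
  also have "\<dots> = z * (y * c) * z" by (simp add: mult.assoc)
  also have "\<dots> = z * (c * y) * z" using assms(1) by simp
  also have "\<dots> = z * c * (y * z)" by (simp add: mult.assoc)
  also have "\<dots> = z * c" using assms(3) by simp
  finally show ?thesis .
qed

lemma sqrt_exists:
  fixes h :: "'a::cstar_algebra"
  assumes ha: "adj h = h" and hn: "norm h \<le> 1/2"
  shows "\<exists>r. adj r = r \<and> r * r = 1 - h * h \<and> r * h = h * r"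
proof -
  define k where "k = h * h"
  have kn: "norm k \<le> 1/4"
  proof -
    have "norm h * norm h \<le> 1/2 * (1/2)" using hn by (intro mult_mono) auto
    then show ?thesis using norm_mult_ineq[of h h] unfolding k_def by simp
  qed
  have ka: "adj k = k" unfolding k_def by (simp add: adj_mult ha)
  have kh: "k * h = h * k" unfolding k_def by (simp add: mult.assoc)
  define S where "S = {s::'a. norm s \<le> 1/4 \<and> s * h = h * s}"
  define T where "T s = scaleR (1/2) (k + s * s)" for s :: 'a
  have closedS: "closed S"
    unfolding S_def
    by (intro closed_Collect_conj closed_Collect_le closed_Collect_eq continuous_intros)
  have lip: "dist (T x) (T y) \<le> 1/4 * dist x y" if "x \<in> S" "y \<in> S" for x y
  proof -
    have nx: "norm x \<le> 1/4" and ny: "norm y \<le> 1/4" using that by (auto simp: S_def)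
    have e: "x * (x - y) + (x - y) * y = x * x - y * y" by (simp add: algebra_simps)
    have "T x - T y = scaleR (1/2) (x * (x - y) + (x - y) * y)"
      unfolding T_def e by (simp add: scaleR_diff_right[symmetric])
    then have "norm (T x - T y) = 1/2 * norm (x * (x - y) + (x - y) * y)" by simp
    also have "\<dots> \<le> 1/2 * (norm x * norm (x - y) + norm (x - y) * norm y)"
      by (intro mult_left_mono order_trans[OF norm_triangle_ineq] add_mono norm_mult_ineq) auto
    also have "\<dots> \<le> 1/2 * (1/4 * norm (x - y) + norm (x - y) * (1/4))"
      by (intro mult_left_mono add_mono mult_right_mono mult_left_mono nx ny) auto
    finally show ?thesis by (simp add: dist_norm)
  qed
  have TS: "T ` S \<subseteq> S"
  proof
    fix t assume "t \<in> T ` S"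
    then obtain s where s: "s \<in> S" "t = T s" by blast
    have ns: "norm s \<le> 1/4" and sh: "s * h = h * s" using s by (auto simp: S_def)
    have "norm s * norm s \<le> 1/4 * (1/4)" using ns by (intro mult_mono) auto
    then have "norm (s * s) \<le> 1/16"
      using norm_mult_ineq[of s s] by simp
    then have "norm (k + s * s) \<le> 1/2" using kn norm_triangle_ineq[of k "s * s"] by linarith
    then have "norm t \<le> 1/4" using s(2) by (simp add: T_def)
    moreover have "t * h = h * t"
    proof -
      have "s * s * h = s * (h * s)" using sh by (simp add: mult.assoc)
      also have "\<dots> = h * (s * s)" using sh by (simp add: mult.assoc[symmetric])
      finally have "s * s * h = h * (s * s)" .
      then have "(k + s * s) * h = h * (k + s * s)" using kh by (simp add: distrib_left distrib_right)
      then show ?thesis using s(2) unfolding T_def by simp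
    qed
    ultimately show "t \<in> S" by (simp add: S_def)
  qed
  have "\<exists>!s\<in>S. T s = s"
  proof (rule Banach_fix[OF _ _ _ _ TS lip])
    show "complete S" using closedS by (simp add: complete_eq_closed)
    have "0 \<in> S" by (simp add: S_def)
    then show "S \<noteq> {}" by blast
  qed auto
  then obtain s where s: "s \<in> S" "T s = s" and uniq: "\<And>s'. s' \<in> S \<Longrightarrow> T s' = s' \<Longrightarrow> s' = s"
    by blast
  have sh: "s * h = h * s" using s by (simp add: S_def)
  have as: "adj s \<in> S"
  proof -
    have "adj s * h = adj (h * s)" by (simp add: adj_mult ha)
    also have "\<dots> = adj (s * h)" using sh by simp
    also have "\<dots> = h * adj s" by (simp add: adj_mult ha)
    finally show ?thesis using s by (simp add: S_def)
  qed
  have "adj (T s) = T (adj s)"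
    unfolding T_def by (simp add: adj_scaleR adj_add adj_mult ka)
  then have "T (adj s) = adj s" using s by simp
  then have sa: "adj s = s" using uniq[OF as] by simp
  define r where "r = 1 - s"
  have "r * r = 1 - (s + s) + s * s" unfolding r_def by (simp add: algebra_simps)
  also have "s + s = k + s * s"
  proof -
    have "scaleR 2 s = scaleR 2 (T s)" using s by simp
    also have "\<dots> = k + s * s" unfolding T_def by simp
    finally show ?thesis by (simp add: scaleR_2)
  qed
  finally have "r * r = 1 - k" by simp
  moreover have "adj r = r" unfolding r_def by (simp add: adj_diff sa)
  moreover have "r * h = h * r" unfolding r_def using sh by (simp add: algebra_simps)
  ultimately show ?thesis unfolding k_def by blast
qed


lemma scaleC_minus_left: "scaleC (- c) (x::'a::complex_vector) = - scaleC c x"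
  by (metis add.right_inverse add_eq_0_iff scaleC_add_left scaleR_scaleC scaleR_zero_left of_real_0)

lemma rep_bound_half:
  fixes h :: "'a::cstar_algebra" and \<pi> :: "'a \<Rightarrow> 'b::cstar_algebra"
  assumes p: "\<pi> \<in> Rep" and ha: "adj h = h" and hn: "norm h \<le> 1/2"
  shows "norm (\<pi> h) \<le> 1"
proof -
  obtain r where ra: "adj r = r" and rr: "r * r = 1 - h * h" and rh: "r * h = h * r"
    using sqrt_exists[OF ha hn] by blast
  define j where "j = scaleC \<i> r"
  have jj: "j * j = - (r * r)"
    unfolding j_def by (simp add: scaleC_mult_left mult_scaleC_right scaleC_scaleC scaleC_minus_left scaleC_one)
  have hj: "h * j = j * h"
    unfolding j_def by (simp add: scaleC_mult_left mult_scaleC_right rh)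
  have ja: "adj j = - j"
    unfolding j_def by (simp add: adj_scaleC ra scaleC_minus_left)
  define u where "u = h + j"
  have au: "adj u = h - j" unfolding u_def by (simp add: adj_add ha ja)
  have e1: "(h - j) * (h + j) = h * h + h * j - j * h - j * j" by (simp add: algebra_simps)
  have e2: "(h + j) * (h - j) = h * h - h * j + j * h - j * j" by (simp add: algebra_simps)
  have "unitary u" unfolding unitary_def au
    by (simp add: u_def e1 e2 hj jj rr)
  then have uu: "unitary (\<pi> u)"
    unfolding unitary_def using p by (metis rep_adj rep_mult rep_one)
  have "u + adj u = h + h" by (simp only: au) (simp add: u_def)
  then have "\<pi> h + \<pi> h = \<pi> u + adj (\<pi> u)" using p by (metis rep_add rep_adj)
  then have "norm (\<pi> h + \<pi> h) \<le> 2"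
    using norm_triangle_ineq[of "\<pi> u" "adj (\<pi> u)"] unitary_norm[OF uu] by simp
  moreover have "\<pi> h + \<pi> h = scaleR 2 (\<pi> h)" by (simp add: scaleR_2)
  ultimately show ?thesis by simp
qed

lemma rep_bound_sa:
  fixes h :: "'a::cstar_algebra" and \<pi> :: "'a \<Rightarrow> 'b::cstar_algebra"
  assumes p: "\<pi> \<in> Rep" and ha: "adj h = h"
  shows "norm (\<pi> h) \<le> 2 * norm h"
proof (cases "h = 0")
  case True then show ?thesis using rep_zero[OF p] by simp
next
  case False
  define c where "c = 1 / (2 * norm h)"
  have c: "c > 0" using False by (simp add: c_def)
  have "norm (\<pi> (scaleR c h)) \<le> 1"
    by (rule rep_bound_half[OF p]) (use False in \<open>simp_all add: adj_scaleR ha c_def\<close>)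
  then have "c * norm (\<pi> h) \<le> 1" using rep_scaleR[OF p] c by simp
  then show ?thesis using False by (simp add: c_def field_simps)
qed

lemma rep_bound:
  fixes x :: "'a::cstar_algebra" and \<pi> :: "'a \<Rightarrow> 'b::cstar_algebra"
  assumes p: "\<pi> \<in> Rep"
  shows "norm (\<pi> x) \<le> 2 * norm x"
proof -
  have "norm (\<pi> x) ^ 2 = norm (\<pi> (adj x * x))"
    using p by (simp add: rep_mult rep_adj cstar_identity)
  also have "\<dots> \<le> 2 * norm (adj x * x)"
    by (rule rep_bound_sa[OF p]) (simp add: adj_mult adj_adj)
  also have "\<dots> = 2 * norm x ^ 2" by (simp add: cstar_identity)
  also have "\<dots> \<le> (2 * norm x) ^ 2" by (simp add: power2_eq_square)
  finally show ?thesis by (rule power2_le_imp_le) simp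
qed


lemma path_unitary:
  fixes w y z :: "'a::cstar_algebra"
  assumes wu: "unitary w" and y: "y = scaleR t 1 + w" and zy: "z * y = 1" and yz: "y * z = 1"
  shows "unitary ((1 + scaleR t w) * z * w)"
proof -
  have ww: "adj w * w = 1" "w * adj w = 1" using wu by (auto simp: unitary_def)
  have ay: "adj y = scaleR t 1 + adj w" using y by (simp add: adj_add adj_scaleR)
  have p_adj: "adj ((1 + scaleR t w) * z * w) = adj w * adj z * (1 + scaleR t (adj w))"
    by (simp add: adj_mult adj_add adj_scaleR mult.assoc)
  have e1: "(1 + scaleR t (adj w)) * (1 + scaleR t w) = adj y * y"
    by (simp only: ay) (simp add: y algebra_simps ww)
  have azy: "adj z * adj y = 1" by (metis adj_mult adj_one yz)
  have ayz: "adj y * adj z = 1" by (metis adj_mult adj_one zy)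
  have "adj w * adj z * (1 + scaleR t (adj w)) * ((1 + scaleR t w) * z * w)
      = adj w * (adj z * adj y) * (y * z) * w"
  proof -
    have e1': "(1 + scaleR t (adj w)) * ((1 + scaleR t w) * X) = adj y * (y * X)" for X
      by (metis e1 mult.assoc)
    show ?thesis by (simp add: mult.assoc e1')
  qed
  also have "\<dots> = 1" by (simp add: azy yz ww)
  finally have 1: "adj ((1 + scaleR t w) * z * w) * ((1 + scaleR t w) * z * w) = 1"
    unfolding p_adj by (simp add: mult.assoc)
  have e2: "1 + scaleR t w = w * adj y" unfolding ay by (simp add: algebra_simps ww)
  have e3: "1 + scaleR t (adj w) = y * adj w" unfolding y by (simp add: algebra_simps ww)
  have yay: "adj y * y = y * adj y" by (simp only: ay) (simp add: y algebra_simps ww)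
  have zay: "adj y * z = z * adj y" by (rule commute_inv[OF yay zy yz])
  have "(1 + scaleR t w) * z * w * (adj w * adj z * (1 + scaleR t (adj w)))
      = w * (adj y * z) * adj z * y * adj w"
    by (simp add: e2 e3 mult.assoc ww(2)[unfolded mult.assoc] )
       (metis mult.assoc mult_1_left ww(2))
  also have "\<dots> = w * z * (adj y * adj z) * y * adj w" by (simp add: zay mult.assoc)
  also have "\<dots> = 1" by (simp add: ayz zy ww mult.assoc)
  finally have 2: "((1 + scaleR t w) * z * w) * adj ((1 + scaleR t w) * z * w) = 1"
    unfolding p_adj by (simp add: mult.assoc)
  show ?thesis using 1 2 by (simp add: unitary_def)
qed

lemma local_path:
  fixes \<rho> :: "'a::cstar_algebra \<Rightarrow> 'b::cstar_algebra"
  assumes wG: "w \<in> rel_commutant_unitaries \<rho> S" and wn: "norm (w - 1) < 1"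
  shows "path_component (rel_commutant_unitaries \<rho> S) 1 w"
proof -
  define d where "d = norm (1 - w)"
  have d: "d < 1" "0 \<le> d" using wn by (auto simp: d_def norm_minus_commute)
  define M where "M = 1 / (1 - d)"
  have M: "M > 0" using d by (simp add: M_def)
  define y where "y t = scaleR t 1 + w" for t
  have inv: "\<exists>z. z * y t = 1 \<and> y t * z = 1 \<and> norm z \<le> M" if t: "t \<ge> 0" for t
  proof -
    define k where "k = scaleR (1/(1+t)) (1 - w)"
    have "norm k = (1/(1+t)) * d" unfolding k_def d_def norm_scaleR using t by simp
    then have nk: "norm k \<le> d" using t d by (simp add: divide_le_eq mult_le_cancel_left1)
    then have nk1: "norm k < 1" using d by simp
    obtain z' where z': "z' * (1 - k) = 1" "(1 - k) * z' = 1" "norm z' \<le> 1 / (1 - norm k)"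
      using inv_exists[OF nk1] by blast
    have "1 / (1 - norm k) \<le> M" unfolding M_def using nk d nk1
      by (intro divide_left_mono) auto
    then have nz': "norm z' \<le> M" using z'(3) by simp
    have yk: "y t = scaleR (1+t) (1 - k)"
      using t by (simp add: y_def k_def algebra_simps)
    define z where "z = scaleR (1/(1+t)) z'"
    have "z * y t = 1" using t z'(1) by (simp add: z_def yk)
    moreover have "y t * z = 1" using t z'(2) by (simp add: z_def yk)
    moreover have "norm z \<le> M"
    proof -
      have "norm z = norm z' / (1 + t)" using t by (simp add: z_def)
      also have "\<dots> \<le> norm z'"
      proof -
        have "norm z' * 1 \<le> norm z' * (1 + t)" using t by (intro mult_left_mono) auto
        then show ?thesis using t by (simp add: divide_le_eq)
      qed
      finally show ?thesis using nz' by simp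
    qed
    ultimately show ?thesis by blast
  qed
  define zz where "zz t = (SOME z. z * y t = 1 \<and> y t * z = 1 \<and> norm z \<le> M)" for t
  have zz: "zz t * y t = 1" "y t * zz t = 1" "norm (zz t) \<le> M" if "t \<ge> 0" for t
    using someI_ex[OF inv[OF that]] unfolding zz_def by blast+
  have lip: "(M * M)-lipschitz_on {0..1} zz"
  proof (rule lipschitz_onI)
    fix s t :: real assume s: "s \<in> {0..1}" and t: "t \<in> {0..1}"
    have "zz t * (y s - y t) * zz s = zz t * y s * zz s - zz t * y t * zz s"
      by (simp add: algebra_simps)
    also have "\<dots> = zz t - zz s" using s t zz by (simp add: mult.assoc)
    finally have e: "zz t - zz s = zz t * scaleR (s - t) 1 * zz s"
      by (simp add: y_def algebra_simps)
    have "norm (zz t - zz s) \<le> norm (zz t) * norm (scaleR (s - t) (1::'b)) * norm (zz s)"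
      unfolding e by (rule order_trans[OF norm_mult_ineq mult_right_mono[OF norm_mult_ineq norm_ge_zero]])
    also have "\<dots> = norm (zz t) * norm (zz s) * \<bar>s - t\<bar>" by simp
    also have "\<dots> \<le> M * M * \<bar>s - t\<bar>"
      using s t zz(3) M by (intro mult_right_mono mult_mono) auto
    finally show "dist (zz s) (zz t) \<le> M * M * dist s t"
      by (simp add: dist_norm norm_minus_commute abs_minus_commute)
  qed (simp)
  have czz: "continuous_on {0..1} zz" by (rule lipschitz_on_continuous_on[OF lip])
  define p where "p t = (1 + scaleR t w) * zz t * w" for t
  have wu: "unitary w" using wG by (simp add: rel_commutant_unitaries_def)
  have "path p" unfolding path_def p_def
    by (intro continuous_intros czz)
  moreover have "path_image p \<subseteq> rel_commutant_unitaries \<rho> S"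
  proof
    fix x assume "x \<in> path_image p"
    then obtain t where t: "t \<in> {0..1}" "x = p t" by (auto simp: path_image_def)
    have "unitary x" unfolding t p_def
      by (rule path_unitary[OF wu _ zz(1) zz(2)]) (use t in \<open>auto simp: y_def\<close>)
    moreover have "x * \<rho> a = \<rho> a * x" if a: "a \<in> S" for a
    proof -
      have cw: "w * \<rho> a = \<rho> a * w" using wG a by (simp add: rel_commutant_unitaries_def)
      have cy: "\<rho> a * y t = y t * \<rho> a" using cw by (simp add: y_def algebra_simps)
      have cz: "\<rho> a * zz t = zz t * \<rho> a" using commute_inv[OF cy zz(1) zz(2)] t by simp
      have c1: "\<rho> a * (1 + scaleR t w) = (1 + scaleR t w) * \<rho> a" using cw by (simp add: algebra_simps)
      have "p t * \<rho> a = (1 + scaleR t w) * zz t * (w * \<rho> a)" by (simp add: p_def mult.assoc)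
      also have "\<dots> = (1 + scaleR t w) * (zz t * \<rho> a) * w" using cw by (simp add: mult.assoc)
      also have "\<dots> = (1 + scaleR t w) * \<rho> a * zz t * w" using cz by (simp add: mult.assoc)
      also have "\<dots> = \<rho> a * (1 + scaleR t w) * zz t * w" using c1 by simp
      also have "\<dots> = \<rho> a * p t" by (simp add: p_def mult.assoc)
      finally show ?thesis using t by simp
    qed
    ultimately show "x \<in> rel_commutant_unitaries \<rho> S" by (simp add: rel_commutant_unitaries_def)
  qed
  moreover have "pathstart p = 1"
    using zz(1)[of 0] by (simp add: pathstart_def p_def y_def)
  moreover have "pathfinish p = w"
  proof -
    have "(1 + w) * zz 1 = 1" using zz(2)[of 1] by (simp add: y_def add.commute)
    then show ?thesis by (simp add: pathfinish_def p_def)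
  qed
  ultimately show ?thesis unfolding path_component_def by blast
qed


lemma G_one: "1 \<in> rel_commutant_unitaries \<rho> S"
  by (simp add: rel_commutant_unitaries_def unitary_one)

lemma G_mult:
  assumes "u \<in> rel_commutant_unitaries \<rho> S" "v \<in> rel_commutant_unitaries \<rho> S"
  shows "u * v \<in> rel_commutant_unitaries \<rho> S"
  using assms unfolding rel_commutant_unitaries_def
  by (auto simp: unitary_mult) (metis mult.assoc)

lemma G_adj:
  assumes "u \<in> rel_commutant_unitaries \<rho> S"
  shows "adj u \<in> rel_commutant_unitaries \<rho> S"
proof -
  have u: "unitary u" "adj u * u = 1" "u * adj u = 1" and c: "\<And>a. a \<in> S \<Longrightarrow> u * \<rho> a = \<rho> a * u"
    using assms by (auto simp: rel_commutant_unitaries_def unitary_def)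
  have "adj u * \<rho> a = \<rho> a * adj u" if "a \<in> S" for a
  proof -
    have "adj u * \<rho> a = adj u * \<rho> a * (u * adj u)" using u by simp
    also have "\<dots> = adj u * (u * \<rho> a) * adj u" using c[OF that] by (simp add: mult.assoc)
    also have "\<dots> = \<rho> a * adj u" using u by (simp add: mult.assoc[symmetric])
    finally show ?thesis .
  qed
  then show ?thesis using u by (simp add: rel_commutant_unitaries_def unitary_adj)
qed

lemma path_component_lmult:
  fixes a :: "'b::cstar_algebra"
  assumes "path_component (rel_commutant_unitaries \<rho> S) x y" "a \<in> rel_commutant_unitaries \<rho> S"
  shows "path_component (rel_commutant_unitaries \<rho> S) (a * x) (a * y)"
proof -
  obtain g where g: "path g" "path_image g \<subseteq> rel_commutant_unitaries \<rho> S" "pathstart g = x" "pathfinish g = y"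
    using assms(1) unfolding path_component_def by blast
  have "path (\<lambda>t. a * g t)" using g(1) unfolding path_def by (intro continuous_intros)
  moreover have "path_image (\<lambda>t. a * g t) \<subseteq> rel_commutant_unitaries \<rho> S"
    using g(2) assms(2) G_mult unfolding path_image_def by blast
  ultimately show ?thesis using g(3,4) unfolding path_component_def pathstart_def pathfinish_def by blast
qed

lemma connected_path:
  fixes \<rho> :: "'a::cstar_algebra \<Rightarrow> 'b::cstar_algebra"
  assumes conn: "connected (rel_commutant_unitaries \<rho> S)" and v: "v \<in> rel_commutant_unitaries \<rho> S"
  shows "path_component (rel_commutant_unitaries \<rho> S) 1 v"
proof (rule connected_equivalence_relation[OF conn G_one v])
  show "path_component (rel_commutant_unitaries \<rho> S) y x" if "path_component (rel_commutant_unitaries \<rho> S) x y" for x y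
    using that by (rule path_component_sym)
  show "path_component (rel_commutant_unitaries \<rho> S) x z"
    if "path_component (rel_commutant_unitaries \<rho> S) x y" "path_component (rel_commutant_unitaries \<rho> S) y z" for x y z
    using that by (rule path_component_trans)
  fix a assume a: "a \<in> rel_commutant_unitaries \<rho> S"
  let ?G = "rel_commutant_unitaries \<rho> S"
  show "\<exists>T. openin (top_of_set ?G) T \<and> a \<in> T \<and> (\<forall>x\<in>T. path_component ?G a x)"
  proof (intro exI conjI ballI)
    show "openin (top_of_set ?G) (?G \<inter> ball a 1)" by (intro openin_open_Int open_ball)
    show "a \<in> ?G \<inter> ball a 1" using a by simp
    fix x assume x: "x \<in> ?G \<inter> ball a 1"
    have au: "adj a * a = 1" "a * adj a = 1" using a by (auto simp: rel_commutant_unitaries_def unitary_def)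
    define w where "w = adj a * x"
    have wG: "w \<in> ?G" unfolding w_def using x a G_mult G_adj by blast
    have "w - 1 = adj a * (x - a)" unfolding w_def using au by (simp add: algebra_simps)
    then have "norm (w - 1) \<le> norm (adj a) * norm (x - a)" using norm_mult_ineq[of "adj a" "x - a"] by simp
    also have "\<dots> = dist a x"
    proof -
      have "unitary a" using a by (simp add: rel_commutant_unitaries_def)
      then have "norm a = 1" by (rule unitary_norm)
      then show ?thesis by (simp add: dist_norm norm_minus_commute)
    qed
    also have "\<dots> < 1" using x by simp
    finally have "path_component ?G 1 w" by (rule local_path[OF wG])
    from path_component_lmult[OF this a] show "path_component ?G a x"
      using au by (simp add: w_def mult.assoc[symmetric])
  qed
qed


theorem mainTheorem7:
  fixes An :: "nat \<Rightarrow> 'a::cstar_algebra set"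
    and \<pi> \<rho> :: "'a \<Rightarrow> 'b::cstar_algebra"
  assumes "separable_space TYPE('a)"
    and "\<And>n. cstar_subalgebra (An n)"
    and "\<And>n. An n \<subseteq> An (Suc n)"
    and "closure (\<Union>n. An n) = UNIV"
    and "\<pi> \<in> Rep" and "\<rho> \<in> Rep"
    and "\<And>n. \<exists>U. unitary U \<and> (\<forall>a\<in>An n. adj U * \<pi> a * U = \<rho> a)"
    and "\<And>n. connected (rel_commutant_unitaries \<rho> (An n))"
  shows "\<exists>\<gamma>. strong_internal_path \<pi> \<rho> \<gamma>"
proof -
  have pR: "\<pi> \<in> Rep" and rR: "\<rho> \<in> Rep" using assms(5,6) by auto
  have mono: "An n \<subseteq> An m" if "n \<le> m" for n m
    using lift_Suc_mono_le[of An, OF assms(3) that] .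
  have "\<forall>n. \<exists>U. unitary U \<and> (\<forall>a\<in>An n. adj U * \<pi> a * U = \<rho> a)" using assms(7) by blast
  then have "\<exists>U. \<forall>n. unitary (U n) \<and> (\<forall>a\<in>An n. adj (U n) * \<pi> a * U n = \<rho> a)" by (rule choice)
  then obtain U where U: "\<And>n. unitary (U n)" "\<And>n a. a \<in> An n \<Longrightarrow> adj (U n) * \<pi> a * U n = \<rho> a"
    by blast
  have Uu: "adj (U n) * U n = 1" "U n * adj (U n) = 1" for n using U(1) by (auto simp: unitary_def)
  have Ur: "U n * \<rho> a = \<pi> a * U n" if "a \<in> An n" for n a
  proof -
    have "U n * \<rho> a = U n * adj (U n) * \<pi> a * U n" using U(2)[OF that] by (simp add: mult.assoc)
    then show ?thesis using Uu by simp
  qed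
  define V where "V n = adj (U n) * U (Suc n)" for n
  have VG: "V n \<in> rel_commutant_unitaries \<rho> (An n)" for n
  proof -
    have "V n * \<rho> a = \<rho> a * V n" if a: "a \<in> An n" for a
    proof -
      have a': "a \<in> An (Suc n)" using a assms(3) by blast
      have "V n * \<rho> a = adj (U n) * \<pi> a * U (Suc n)" unfolding V_def using Ur[OF a'] by (simp add: mult.assoc)
      also have "\<dots> = adj (U n) * \<pi> a * U n * adj (U n) * U (Suc n)" using Uu by (simp add: mult.assoc)
      also have "\<dots> = \<rho> a * V n" unfolding V_def using U(2)[OF a] by (simp add: mult.assoc)
      finally show ?thesis .
    qed
    then show ?thesis unfolding V_def rel_commutant_unitaries_def
      using U(1) by (simp add: unitary_mult unitary_adj)
  qed
  have "\<forall>n. \<exists>g. path g \<and> path_image g \<subseteq> rel_commutant_unitaries \<rho> (An n) \<and> g 0 = 1 \<and> g 1 = V n"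
    using connected_path[OF assms(8) VG] unfolding path_component_def pathstart_def pathfinish_def by blast
  then have "\<exists>g. \<forall>n. path (g n) \<and> path_image (g n) \<subseteq> rel_commutant_unitaries \<rho> (An n) \<and> g n 0 = 1 \<and> g n 1 = V n"
    by (rule choice)
  then obtain g where g: "\<And>n. path (g n)" "\<And>n. path_image (g n) \<subseteq> rel_commutant_unitaries \<rho> (An n)"
    "\<And>n. g n 0 = 1" "\<And>n. g n 1 = V n"
    by blast
  define F where "F s = (if s \<le> 0 then U 0 else U (nat \<lfloor>s\<rfloor>) * g (nat \<lfloor>s\<rfloor>) (s - of_int \<lfloor>s\<rfloor>))" for s :: real
  have Fpiece: "F s = U N * g N (s - real N)" if s: "real N \<le> s" "s \<le> real N + 1" for N s
  proof (cases "s = real N + 1")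
    case True
    have "nat (int N + 1) = Suc N" by (metis Suc_as_int nat_int)
    then have "F s = U (Suc N)" using g(3) True by (simp add: F_def)
    also have "\<dots> = U N * g N (s - real N)" using True g(4) Uu by (simp add: V_def mult.assoc[symmetric])
    finally show ?thesis .
  next
    case False
    then have fl: "\<lfloor>s\<rfloor> = int N" using s by (simp add: floor_eq_iff)
    show ?thesis
    proof (cases "s \<le> 0")
      case True
      then have "s = 0" "N = 0" using s by auto
      then show ?thesis using g(3) by (simp add: F_def)
    next
      case False
      then show ?thesis by (simp add: F_def fl)
    qed
  qed
  have FcontN: "continuous_on {..real N} F" for N
  proof (induction N)
    case 0
    have "continuous_on {..real 0} (\<lambda>s. U 0)" by simp
    then show ?case by (rule continuous_on_eq) (simp add: F_def)
  next
    case (Suc N)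
    have gc: "continuous_on {0..1} (g N)" using g(1) by (simp add: path_def)
    have c1: "continuous_on {real N..real N + 1} (\<lambda>s. s - real N)" by (intro continuous_intros)
    have im: "(\<lambda>s. s - real N) ` {real N..real N + 1} \<subseteq> {0..1}" by auto
    have "continuous_on {real N..real N + 1} (\<lambda>s. g N (s - real N))"
      by (rule continuous_on_compose2[OF gc c1 im])
    then have "continuous_on {real N..real N + 1} (\<lambda>s. U N * g N (s - real N))"
      by (rule continuous_on_mult_left)
    then have "continuous_on {real N..real N + 1} F"
      by (rule continuous_on_eq) (auto simp: Fpiece)
    then have "continuous_on ({..real N} \<union> {real N..real N + 1}) F"
      using Suc by (intro continuous_on_closed_Un) auto
    moreover have "{..real N} \<union> {real N..real N + 1} = {..real (Suc N)}" by auto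
    ultimately show ?case by simp
  qed
  have Fcont: "isCont F s" for s
  proof -
    obtain N where "s < real N" using reals_Archimedean2 by blast
    then show ?thesis using FcontN[of N] by (intro continuous_on_interior) auto
  qed
  have Fnat: "F s = U (nat \<lfloor>s\<rfloor>) * g (nat \<lfloor>s\<rfloor>) (s - real (nat \<lfloor>s\<rfloor>))"
    and Fin: "s - real (nat \<lfloor>s\<rfloor>) \<in> {0..1}" if "s \<ge> 0" for s
  proof -
    have a: "real (nat \<lfloor>s\<rfloor>) = of_int \<lfloor>s\<rfloor>" using that by simp
    have b: "of_int \<lfloor>s\<rfloor> \<le> s" "s \<le> of_int \<lfloor>s\<rfloor> + 1"
      using of_int_floor_le[of s] real_of_int_floor_add_one_gt[of s] by linarith+
    show "F s = U (nat \<lfloor>s\<rfloor>) * g (nat \<lfloor>s\<rfloor>) (s - real (nat \<lfloor>s\<rfloor>))"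
      by (rule Fpiece) (use a b in linarith)+
    show "s - real (nat \<lfloor>s\<rfloor>) \<in> {0..1}" unfolding atLeastAtMost_iff a using b by linarith
  qed
  have gG: "g N x \<in> rel_commutant_unitaries \<rho> (An N)" if "x \<in> {0..1}" for N x
    using g(2)[of N] that unfolding path_image_def by blast
  have Funit: "unitary (F s)" if "s \<ge> 0" for s
    using Fnat[OF that] gG[OF Fin[OF that]] U(1)
    by (simp add: rel_commutant_unitaries_def unitary_mult)
  have Fconj: "adj (F s) * \<pi> b * F s = \<rho> b" if s: "s \<ge> real n" and b: "b \<in> An n" for s n b
  proof -
    have s0: "s \<ge> 0" using s of_nat_0_le_iff[of n] by linarith
    define N where "N = nat \<lfloor>s\<rfloor>"
    have "n \<le> N" unfolding N_def using s by (simp add: le_nat_floor)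
    then have bN: "b \<in> An N" using mono b by blast
    define h where "h = g N (s - real N)"
    have hG: "h \<in> rel_commutant_unitaries \<rho> (An N)" unfolding h_def N_def using gG[OF Fin[OF s0]] .
    then have hu: "adj h * h = 1" and hc: "h * \<rho> b = \<rho> b * h"
      using bN by (auto simp: rel_commutant_unitaries_def unitary_def)
    have "F s = U N * h" unfolding h_def N_def using Fnat[OF s0] .
    then have "adj (F s) * \<pi> b * F s = adj h * (adj (U N) * \<pi> b * U N) * h"
      by (simp add: adj_mult mult.assoc)
    also have "\<dots> = adj h * (h * \<rho> b)" using U(2)[OF bN] hc by (simp add: mult.assoc)
    also have "\<dots> = \<rho> b" using hu by (simp add: mult.assoc[symmetric])
    finally show ?thesis .
  qed
  define \<gamma> where "\<gamma> t = F (t / (1 - t))" for t :: real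
  have "strong_internal_path \<pi> \<rho> \<gamma>"
    unfolding strong_internal_path_def
  proof (intro conjI ballI allI)
    show "continuous_on {0..<1} \<gamma>"
    proof (intro continuous_at_imp_continuous_on ballI)
      fix t :: real assume t: "t \<in> {0..<1}"
      have "isCont (\<lambda>t. t / (1 - t)) t" using t by (intro continuous_intros) auto
      then show "isCont \<gamma> t" unfolding \<gamma>_def by (rule isCont_o2[OF _ Fcont])
    qed
  next
    fix t :: real assume t: "t \<in> {0..<1}"
    then show "unitary (\<gamma> t)" unfolding \<gamma>_def by (intro Funit) auto
  next
    fix a
    show "((\<lambda>t. norm (adj (\<gamma> t) * \<pi> a * \<gamma> t - \<rho> a)) \<longlongrightarrow> 0) (at_left 1)"
    proof (rule tendstoI)
      fix e :: real assume e: "e > 0"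
      have "a \<in> closure (\<Union>n. An n)" using assms(4) by simp
      then obtain b where b: "b \<in> (\<Union>n. An n)" "dist b a < e / 8"
        using e unfolding closure_approachable by (meson divide_pos_pos zero_less_numeral)
      then obtain n where bn: "b \<in> An n" by blast
      have ev: "eventually (\<lambda>t. t \<in> {1 - 1 / (real n + 1)<..<1}) (at_left (1::real))"
        by (rule eventually_at_left_real) simp
      show "eventually (\<lambda>t. dist (norm (adj (\<gamma> t) * \<pi> a * \<gamma> t - \<rho> a)) 0 < e) (at_left 1)"
      proof (rule eventually_mono[OF ev])
        fix t :: real assume t: "t \<in> {1 - 1 / (real n + 1)<..<1}"
        have t1: "1 - t > 0" using t by simp
        have "real n \<le> t / (1 - t)"
        proof -
          have "1 - t < 1 / (real n + 1)" using t by simp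
          then have "(1 - t) * (real n + 1) < 1" by (simp add: field_simps)
          then have "real n * (1 - t) \<le> t" by (simp add: algebra_simps)
          then show ?thesis using t1 by (simp add: field_simps)
        qed
        then have tn: "real n \<le> t / (1 - t)" .
        then have cj: "adj (\<gamma> t) * \<pi> b * \<gamma> t = \<rho> b" unfolding \<gamma>_def using Fconj bn by blast
        have gu: "unitary (\<gamma> t)" unfolding \<gamma>_def using tn of_nat_0_le_iff[of n]
          by (intro Funit) linarith
        have ng: "norm (\<gamma> t) = 1" "norm (adj (\<gamma> t)) = 1" using unitary_norm[OF gu] by auto
        have "adj (\<gamma> t) * \<pi> a * \<gamma> t - \<rho> a = adj (\<gamma> t) * \<pi> (a - b) * \<gamma> t - \<rho> (a - b)"
          using cj by (simp add: rep_diff[OF pR] rep_diff[OF rR] algebra_simps)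
        then have "norm (adj (\<gamma> t) * \<pi> a * \<gamma> t - \<rho> a) \<le> norm (adj (\<gamma> t) * \<pi> (a - b) * \<gamma> t) + norm (\<rho> (a - b))"
          by (simp add: norm_triangle_ineq4)
        also have "norm (adj (\<gamma> t) * \<pi> (a - b) * \<gamma> t) \<le> norm (\<pi> (a - b))"
          using order_trans[OF norm_mult_ineq mult_right_mono[OF norm_mult_ineq norm_ge_zero], of "adj (\<gamma> t)" "\<pi> (a - b)" "\<gamma> t"]
          by (simp add: ng)
        also have "norm (\<pi> (a - b)) + norm (\<rho> (a - b)) \<le> 2 * norm (a - b) + 2 * norm (a - b)"
          using rep_bound[OF pR] rep_bound[OF rR] by (intro add_mono)
        also have "\<dots> < e" using b(2) norm_ge_zero[of "a - b"] unfolding dist_norm norm_minus_commute[of b a] by linarith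
        finally show "dist (norm (adj (\<gamma> t) * \<pi> a * \<gamma> t - \<rho> a)) 0 < e" by simp
      qed
    qed
  qed
  then show ?thesis by blast
qed

end
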